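(* The homomorphism $\mathcal{B}_{-1}:B_{2n+1}\to Sp(2n,\mathbb{R})$ lifts to a homomorphism $\widetilde{\mathcal{B}}_{-1}:B_{2n+1}\to\widetilde{Sp}(2n,\mathbb{R})$, i.e. there is a homomorphism $\widetilde{\mathcal{B}}_{-1}$ with $p\circ\widetilde{\mathcal{B}}_{-1}=\mathcal{B}_{-1}$, where $p:\widetilde{Sp}(2n,\mathbb{R})\to Sp(2n,\mathbb{R})$ is the universal covering map.
   Context: $B_{2n+1}$ is the braid group on $2n+1$ strands with standard generators $\sigma_1,\dots,\sigma_{2n}$. Let $\Sigma_n$ be the double cover of the disk branched at $2n+1$ points (a genus $n$ surface with one boundary component); $B_{2n+1}$ acts on $\Sigma_n$ with $\sigma_i$ lifting to a positive Dehn twist about a nonseparating simple closed curve $C_i$, the $C_i$ forming a chain. $\mathcal{B}_{-1}$ is the induced action on $H_1(\Sigma_n,\partial\Sigma_n;\mathbb{R})\cong\mathbb{R}^{2n}$, which preserves the intersection pairing $\omega$ (a symplectic form), so $\mathcal{B}_{-1}$ takes values in $Sp(2n,\mathbb{R})$ (this is the Burau representation at $-1$). Concretely, orienting the $C_i$ so that $\omega(C_i,C_j)=\delta_{i+1,j}-\delta_{i-1,j}$, $\mathcal{B}_{-1}(\sigma_i)(x)=x+\omega(C_i,x)C_i$. $\widetilde{Sp}(2n,\mathbb{R})$ is the universal cover, viewed as homotopy classes rel endpoints of paths in $Sp(2n,\mathbb{R})$ starting at the identity. *)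

theory Defs
  imports "HOL-Analysis.Analysis"
begin

text \<open>Real d x d matrices, represented as functions nat => nat => real that vanish
  outside the index box {0..<d} x {0..<d}; they carry the product topology
  (which, on such matrices, is the usual Euclidean topology).
  Here d = 2n and index i (0-based) corresponds to the curve C_(i+1).\<close>

type_synonym mat = "nat \<Rightarrow> nat \<Rightarrow> real"

definition mat_mul :: "nat \<Rightarrow> mat \<Rightarrow> mat \<Rightarrow> mat" where
  "mat_mul d A B = (\<lambda>i j. if i < d \<and> j < d then (\<Sum>k<d. A i k * B k j) else 0)"

definition mat_id :: "nat \<Rightarrow> mat" where
  "mat_id d = (\<lambda>i j. if i < d \<and> j = i then 1 else 0)"

definition mat_transpose :: "mat \<Rightarrow> mat" where
  "mat_transpose A = (\<lambda>i j. A j i)"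

text \<open>Gram matrix of the intersection form in the basis C_1..C_d:
  omega(C_i, C_j) = delta(i+1,j) - delta(i-1,j).\<close>

definition omega :: "nat \<Rightarrow> mat" where
  "omega d = (\<lambda>i j. if i < d \<and> j < d then
      (if j = i + 1 then 1 else if i = j + 1 then -1 else 0) else 0)"

definition Sp :: "nat \<Rightarrow> mat set" where
  "Sp d = {M. (\<forall>i j. (d \<le> i \<or> d \<le> j) \<longrightarrow> M i j = 0) \<and>
              mat_mul d (mat_transpose M) (mat_mul d (omega d) M) = omega d}"

text \<open>Matrix (in the basis C_1..C_d) of B_{-1}(sigma_(i+1)) : x |-> x + omega(C_i,x) C_i,
  and of its inverse x |-> x - omega(C_i,x) C_i.\<close>

definition burau_gen :: "nat \<Rightarrow> nat \<Rightarrow> bool \<Rightarrow> mat" where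
  "burau_gen d i pos = (\<lambda>k j. mat_id d k j +
      (if k = i then (if pos then 1 else -1) * omega d i j else 0))"

text \<open>Braid words: a letter (i, True) is sigma_(i+1), (i, False) is its inverse.
  The braid group B_(d+1) is the set of words with all indices < d modulo the
  congruence braid_eq d generated by free cancellation and the braid relations.\<close>

type_synonym braid_word = "(nat \<times> bool) list"

definition braid_word :: "nat \<Rightarrow> braid_word \<Rightarrow> bool" where
  "braid_word d w \<longleftrightarrow> (\<forall>x\<in>set w. fst x < d)"

inductive braid_eq :: "nat \<Rightarrow> braid_word \<Rightarrow> braid_word \<Rightarrow> bool" for d where
  refl: "braid_eq d w w"
| sym: "braid_eq d u v \<Longrightarrow> braid_eq d v u"
| trans: "braid_eq d u v \<Longrightarrow> braid_eq d v w \<Longrightarrow> braid_eq d u w"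
| ctxt: "braid_eq d u v \<Longrightarrow> braid_eq d (a @ u @ b) (a @ v @ b)"
| cancel: "i < d \<Longrightarrow> braid_eq d [(i, b), (i, \<not> b)] []"
| far_comm: "i < d \<Longrightarrow> j < d \<Longrightarrow> i + 1 < j \<Longrightarrow>
      braid_eq d [(i, True), (j, True)] [(j, True), (i, True)]"
| braid: "i + 1 < d \<Longrightarrow>
      braid_eq d [(i, True), (i + 1, True), (i, True)] [(i + 1, True), (i, True), (i + 1, True)]"

fun burau_word :: "nat \<Rightarrow> braid_word \<Rightarrow> mat" where
  "burau_word d [] = mat_id d"
| "burau_word d (x # w) = mat_mul d (burau_gen d (fst x) (snd x)) (burau_word d w)"

text \<open>Universal cover of Sp(d,R): homotopy classes rel endpoints (homotopic_paths (Sp d))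
  of paths in Sp(d,R) starting at the identity; the group law is pointwise product of
  paths, and the covering map p sends a class to the endpoint of the path.\<close>

definition sp_path :: "nat \<Rightarrow> (real \<Rightarrow> mat) \<Rightarrow> bool" where
  "sp_path d g \<longleftrightarrow> path g \<and> path_image g \<subseteq> Sp d \<and> pathstart g = mat_id d"

definition sp_path_mul :: "nat \<Rightarrow> (real \<Rightarrow> mat) \<Rightarrow> (real \<Rightarrow> mat) \<Rightarrow> (real \<Rightarrow> mat)" where
  "sp_path_mul d g h = (\<lambda>t. mat_mul d (g t) (h t))"

end

theory Submission
  imports Defs
begin
definition trunc :: "nat \<Rightarrow> mat \<Rightarrow> bool" where
  "trunc d M \<longleftrightarrow> (\<forall>i j. (d \<le> i \<or> d \<le> j) \<longrightarrow> M i j = 0)"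

lemma trunc_mul[simp]: "trunc d (mat_mul d A B)"
  by (simp add: trunc_def mat_mul_def)

lemma trunc_id[simp]: "trunc d (mat_id d)"
  by (simp add: trunc_def mat_id_def)

lemma Sp_trunc: "M \<in> Sp d \<Longrightarrow> trunc d M"
  by (simp add: trunc_def Sp_def)

lemma mat_mul_assoc: "mat_mul d (mat_mul d A B) C = mat_mul d A (mat_mul d B C)"
proof (intro ext)
  fix i j
  show "mat_mul d (mat_mul d A B) C i j = mat_mul d A (mat_mul d B C) i j"
  proof (cases "i < d \<and> j < d")
    case True
    have "(\<Sum>k<d. (\<Sum>l<d. A i l * B l k) * C k j) = (\<Sum>k<d. \<Sum>l<d. A i l * B l k * C k j)"
      by (simp add: sum_distrib_right)
    also have "\<dots> = (\<Sum>l<d. \<Sum>k<d. A i l * B l k * C k j)"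
      by (rule sum.swap)
    also have "\<dots> = (\<Sum>l<d. A i l * (\<Sum>k<d. B l k * C k j))"
      by (simp add: sum_distrib_left mult.assoc)
    finally show ?thesis using True by (simp add: mat_mul_def)
  next
    case False
    then show ?thesis unfolding mat_mul_def by auto
  qed
qed

lemma mat_mul_id_left: assumes "trunc d M" shows "mat_mul d (mat_id d) M = M"
proof (intro ext)
  fix i j
  have "i < d \<Longrightarrow> (\<Sum>k<d. mat_id d i k * M k j) = (\<Sum>k<d. if k = i then M i j else 0)"
    by (rule sum.cong) (auto simp: mat_id_def)
  then show "mat_mul d (mat_id d) M i j = M i j" using assms
    by (auto simp: mat_mul_def trunc_def)
qed

lemma mat_mul_id_right: assumes "trunc d M" shows "mat_mul d M (mat_id d) = M"
proof (intro ext)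
  fix i j
  have "j < d \<Longrightarrow> (\<Sum>k<d. M i k * mat_id d k j) = (\<Sum>k<d. if k = j then M i j else 0)"
    by (rule sum.cong) (auto simp: mat_id_def)
  then show "mat_mul d M (mat_id d) i j = M i j" using assms
    by (auto simp: mat_mul_def trunc_def)
qed

lemma transpose_mul: "mat_transpose (mat_mul d A B) = mat_mul d (mat_transpose B) (mat_transpose A)"
  by (auto simp: mat_mul_def mat_transpose_def mult.commute intro!: ext)

lemma Sp_mul: assumes "A \<in> Sp d" "B \<in> Sp d" shows "mat_mul d A B \<in> Sp d"
proof -
  have a: "mat_mul d (mat_transpose A) (mat_mul d (omega d) A) = omega d"
   and b: "mat_mul d (mat_transpose B) (mat_mul d (omega d) B) = omega d"
    using assms by (auto simp: Sp_def)
  have "mat_mul d (mat_transpose (mat_mul d A B)) (mat_mul d (omega d) (mat_mul d A B))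
    = mat_mul d (mat_transpose B) (mat_mul d (mat_transpose A) (mat_mul d (mat_mul d (omega d) A) B))"
    by (simp add: transpose_mul mat_mul_assoc)
  also have "\<dots> = mat_mul d (mat_transpose B) (mat_mul d (mat_mul d (mat_transpose A) (mat_mul d (omega d) A)) B)"
    by (simp add: mat_mul_assoc)
  also have "\<dots> = omega d" using a b by simp
  finally show ?thesis by (simp add: Sp_def mat_mul_def)
qed

lemma Sp_id: "mat_id d \<in> Sp d"
proof -
  have "trunc d (omega d)" by (simp add: trunc_def omega_def)
  moreover have "mat_transpose (mat_id d) = mat_id d" by (auto simp: mat_transpose_def mat_id_def intro!: ext)
  ultimately show ?thesis by (simp add: Sp_def mat_mul_id_left mat_mul_id_right) (simp add: mat_id_def)
qed


definition Tr :: "nat \<Rightarrow> nat \<Rightarrow> real \<Rightarrow> mat" where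
  "Tr d i x = (\<lambda>k j. mat_id d k j + (if k = i then x * omega d i j else 0))"

lemma omega_trunc: "d \<le> i \<or> d \<le> j \<Longrightarrow> omega d i j = 0"
  by (auto simp: omega_def)

lemma trunc_omega[simp]: "trunc d (omega d)" by (simp add: trunc_def omega_def)

lemma trunc_Tr[simp]: "trunc d (Tr d i x)"
  by (auto simp: trunc_def Tr_def mat_id_def omega_def)

lemma Tr_big: "d \<le> i \<Longrightarrow> Tr d i x = mat_id d"
  by (auto simp: Tr_def omega_def intro!: ext)

lemma Tr_zero: "Tr d i 0 = mat_id d"
  by (auto simp: Tr_def intro!: ext)

lemma sum_id1: fixes f :: "nat \<Rightarrow> real" shows "(\<Sum>l<d. mat_id d l j * f l) = (if j < d then f j else 0)"
proof -
  have "(\<Sum>l<d. mat_id d l j * f l) = (\<Sum>l<d. if l = j then f j else 0)"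
    by (rule sum.cong) (auto simp: mat_id_def)
  then show ?thesis by simp
qed

lemma sum_id2: "(\<Sum>l<d. f l * mat_id d l j) = (if j < d then f j else 0)"
  using sum_id1[of d j f] by (simp add: mult.commute)

lemma sum_at1: fixes f :: "nat \<Rightarrow> real" shows "(\<Sum>l<d. (if l = a then c else 0) * f l) = (if a < d then c * f a else 0)"
proof -
  have "(\<Sum>l<d. (if l = a then c else 0) * f l) = (\<Sum>l<d. if l = a then c * f a else 0)"
    by (rule sum.cong) auto
  then show ?thesis by simp
qed

lemma sum_at2: fixes f :: "nat \<Rightarrow> real" shows "(\<Sum>l<d. f l * (if l = a then c else 0)) = (if a < d then f a * c else 0)"
proof -
  have "(\<Sum>l<d. f l * (if l = a then c else 0)) = (\<Sum>l<d. if l = a then f a * c else 0)"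
    by (rule sum.cong) auto
  then show ?thesis by simp
qed

lemma Tr_row: assumes "trunc d M"
  shows "mat_mul d (Tr d i x) M = (\<lambda>k j. M k j + (if k = i then x * (\<Sum>l<d. omega d i l * M l j) else 0))"
proof (intro ext)
  fix k j
  show "mat_mul d (Tr d i x) M k j = M k j + (if k = i then x * (\<Sum>l<d. omega d i l * M l j) else 0)"
  proof (cases "k < d \<and> j < d")
    case True
    have "(\<Sum>l<d. Tr d i x k l * M l j) = (\<Sum>l<d. mat_id d k l * M l j) + (\<Sum>l<d. (if k = i then x * omega d i l * M l j else 0))"
    proof -
      have "(\<Sum>l<d. Tr d i x k l * M l j) = (\<Sum>l<d. mat_id d k l * M l j + (if k = i then x * omega d i l * M l j else 0))"
        by (rule sum.cong) (auto simp: Tr_def algebra_simps)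
      then show ?thesis by (simp add: sum.distrib)
    qed
    also have "(\<Sum>l<d. mat_id d k l * M l j) = M k j"
    proof -
      have "(\<Sum>l<d. mat_id d k l * M l j) = (\<Sum>l<d. if l = k then M k j else 0)"
        by (rule sum.cong) (auto simp: mat_id_def)
      then show ?thesis using True by simp
    qed
    finally show ?thesis using True by (simp add: mat_mul_def sum_distrib_left mult.assoc)
  next
    case False
    then show ?thesis using assms
      by (auto simp: mat_mul_def trunc_def omega_trunc)
  qed
qed

lemma omega_simps[simp]:
  "omega d a a = 0"
  "Suc a < d \<Longrightarrow> omega d a (Suc a) = 1"
  "Suc a < d \<Longrightarrow> omega d (Suc a) a = -1"
  by (auto simp: omega_def)

lemma omega_antisym: "omega d k i = - omega d i k"
  by (auto simp: omega_def)

lemma Tr_add: "mat_mul d (Tr d i x) (Tr d i y) = Tr d i (x + y)"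
proof (cases "i < d")
  case True
  show ?thesis
    apply (subst Tr_row, simp)
    apply (rule ext)+
    apply (simp add: Tr_def distrib_left sum.distrib sum_id2 sum_at2)
    apply (auto simp: omega_trunc algebra_simps)
    done
next
  case False
  then show ?thesis by (simp add: Tr_big mat_mul_id_left)
qed

lemma Tr_comm: assumes "i + 1 < j"
  shows "mat_mul d (Tr d i x) (Tr d j y) = mat_mul d (Tr d j y) (Tr d i x)"
proof -
  have o: "omega d i j = 0" "omega d j i = 0" using assms by (auto simp: omega_def)
  show ?thesis
    apply (simp add: Tr_row)
    apply (rule ext)+
    apply (simp add: Tr_def distrib_left sum.distrib sum_id2 sum_at2 o)
    apply (auto simp: omega_trunc algebra_simps o)
    done
qed

lemma Tr_Sp: "Tr d i x \<in> Sp d"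
proof (cases "i < d")
  case False then show ?thesis by (simp add: Tr_big Sp_id)
next
  case True
  define P where "P = (\<lambda>k j. omega d k j + omega d k i * x * omega d i j)"
  have tP: "trunc d P" by (auto simp: P_def trunc_def omega_trunc)
  have 1: "mat_mul d (omega d) (Tr d i x) = P"
    apply (rule ext)+
    apply (simp add: mat_mul_def Tr_def distrib_left sum.distrib sum_id2 sum_at2 P_def)
    apply (auto simp: omega_trunc True)
    done
  have 2: "mat_mul d (mat_transpose (Tr d i x)) P = omega d"
    apply (rule ext)+
    apply (simp add: mat_mul_def mat_transpose_def Tr_def distrib_right sum.distrib sum_id1 sum_at1)
    apply (auto simp: omega_trunc True P_def algebra_simps)
    apply (simp add: omega_antisym[of d _ i])
    done
  show ?thesis using 1 2 by (simp add: Sp_def) (auto simp: Tr_def omega_trunc mat_id_def)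
qed


definition Q :: "nat \<Rightarrow> nat \<Rightarrow> real \<Rightarrow> real \<Rightarrow> real \<Rightarrow> real \<Rightarrow> mat" where
  "Q d a al be ga de = (\<lambda>k j. mat_id d k j
      + (if k = a then al * omega d a j + ga * omega d (Suc a) j else 0)
      + (if k = Suc a then be * omega d (Suc a) j + de * omega d a j else 0))"

lemma trunc_Q[simp]: "Suc a < d \<Longrightarrow> trunc d (Q d a al be ga de)"
  by (auto simp: trunc_def Q_def mat_id_def omega_trunc)

lemma Q_id: "mat_id d = Q d a 0 0 0 0"
  unfolding Q_def by (intro ext) simp

lemma Q_a: assumes "Suc a < d"
  shows "mat_mul d (Tr d a x) (Q d a al be ga de) = Q d a (al + x * (1 + de)) be (ga + x * be) de"
  using assms
  apply (simp add: Tr_row)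
  apply (rule ext)+
  apply (simp add: Q_def distrib_left sum.distrib sum_id2 sum_at2)
  apply (auto simp: omega_trunc algebra_simps)
  done

lemma Q_b: assumes "Suc a < d"
  shows "mat_mul d (Tr d (Suc a) y) (Q d a al be ga de) = Q d a al (be + y * (1 - ga)) ga (de - y * al)"
  using assms
  apply (simp add: Tr_row)
  apply (rule ext)+
  apply (simp add: Q_def distrib_left sum.distrib sum_id2 sum_at2)
  apply (auto simp: omega_trunc algebra_simps)
  done


lemma Q_prod1: assumes "Suc a < d"
  shows "mat_mul d (Tr d a x) (mat_mul d (Tr d (Suc a) y) (mat_mul d (Tr d a x) (mat_id d)))
     = Q d a (2*x - x*x*y) y (x*y) (-(x*y))"
proof -
  have "mat_mul d (Tr d a x) (mat_mul d (Tr d (Suc a) y) (mat_mul d (Tr d a x) (mat_id d)))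
     = Q d a (x * (1 + 0) + x * (1 + (0 - y * (x * (1 + 0))))) (y * (1 - x * 0)) (x * (y * (1 - x * 0))) (0 - y * (x * (1 + 0)))"
    using assms by (simp only: Q_id[of d a] Q_a Q_b trunc_Q add_0 mult_zero_left mult_zero_right)
  also have "\<dots> = Q d a (2*x - x*x*y) y (x*y) (-(x*y))"
    by (simp add: algebra_simps)
  finally show ?thesis .
qed

lemma Q_prod2: assumes "Suc a < d"
  shows "mat_mul d (Tr d (Suc a) y) (mat_mul d (Tr d a x) (mat_mul d (Tr d (Suc a) y) (mat_id d)))
     = Q d a x (2*y - y*x*y) (x*y) (-(x*y))"
proof -
  have "mat_mul d (Tr d (Suc a) y) (mat_mul d (Tr d a x) (mat_mul d (Tr d (Suc a) y) (mat_id d)))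
     = Q d a (x * (1 + (0 - y * 0))) (y * (1 - 0) + y * (1 - x * (y * (1 - 0)))) (x * (y * (1 - 0))) ((0 - y * 0) - y * (x * (1 + (0 - y * 0))))"
    using assms by (simp only: Q_id[of d a] Q_a Q_b trunc_Q add_0 mult_zero_left mult_zero_right)
  also have "\<dots> = Q d a x (2*y - y*x*y) (x*y) (-(x*y))"
    by (simp add: algebra_simps)
  finally show ?thesis .
qed

definition sg :: "bool \<Rightarrow> real" where "sg b = (if b then 1 else -1)"

fun Fw :: "nat \<Rightarrow> braid_word \<Rightarrow> real \<Rightarrow> mat" where
  "Fw d [] t = mat_id d"
| "Fw d (x # w) t = mat_mul d (Tr d (fst x) (sg (snd x) * t)) (Fw d w t)"

lemma burau_gen_Tr: "burau_gen d i b = Tr d i (sg b)"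
  by (cases b) (auto simp: burau_gen_def Tr_def sg_def intro!: ext)

lemma Fw_one: "Fw d w 1 = burau_word d w"
  by (induction w) (auto simp: burau_gen_Tr)

lemma trunc_Fw[simp]: "trunc d (Fw d w t)"
  by (cases w) auto

lemma Fw_zero: "Fw d w 0 = mat_id d"
  by (induction w) (auto simp: Tr_zero mat_mul_id_left)

lemma Fw_Sp: "Fw d w t \<in> Sp d"
  by (induction w) (auto simp: Sp_id Sp_mul Tr_Sp)

lemma Fw_append: "Fw d (u @ v) t = mat_mul d (Fw d u t) (Fw d v t)"
  by (induction u) (auto simp: mat_mul_id_left mat_mul_assoc)

lemma cont_coord: "continuous_on S f \<Longrightarrow> continuous_on S (\<lambda>x. (f x :: mat) i j)"
  by (intro continuous_on_product_then_coordinatewise[where f="\<lambda>x. f x i"]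
       continuous_on_product_then_coordinatewise[where f=f])

lemma cont_mat: "(\<And>i j. continuous_on S (\<lambda>x. (f x :: mat) i j)) \<Longrightarrow> continuous_on S f"
  by (intro continuous_on_coordinatewise_then_product)

lemma cont_mul: assumes "continuous_on S f" "continuous_on S g"
  shows "continuous_on S (\<lambda>x. mat_mul d (f x) (g x))"
proof (rule cont_mat)
  fix i j
  show "continuous_on S (\<lambda>x. mat_mul d (f x) (g x) i j)"
  proof (cases "i < d \<and> j < d")
    case True
    have "continuous_on S (\<lambda>x. \<Sum>k<d. f x i k * g x k j)"
      by (intro continuous_on_sum continuous_on_mult cont_coord assms)
    then show ?thesis using True by (simp add: mat_mul_def)
  next
    case False
    then have eq: "(\<lambda>x. mat_mul d (f x) (g x) i j) = (\<lambda>x. 0)" by (auto simp: mat_mul_def)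
    show ?thesis by (subst eq) (rule continuous_on_const)
  qed
qed

lemma cont_Tr: "continuous_on S (\<lambda>t. Tr d i (c * t))"
proof (rule cont_mat)
  fix k j
  show "continuous_on S (\<lambda>t. Tr d i (c * t) k j)"
  proof (cases "k = i")
    case True
    have "continuous_on S (\<lambda>t. mat_id d k j + c * t * omega d i j)"
      by (intro continuous_on_add continuous_on_mult continuous_on_const continuous_on_id)
    then show ?thesis using True by (simp add: Tr_def)
  next
    case False
    then show ?thesis by (simp add: Tr_def continuous_on_const)
  qed
qed

lemma cont_Fw: "continuous_on S (Fw d w)"
proof (induction w)
  case Nil
  then show ?case by (simp add: continuous_on_const)
next
  case (Cons x w)
  have "Fw d (x # w) = (\<lambda>t. mat_mul d (Tr d (fst x) (sg (snd x) * t)) (Fw d w t))" by (rule ext) simp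
  then show ?case using Cons by (simp add: cont_mul cont_Tr)
qed

lemma path_Fw: "path (Fw d w)" by (simp add: path_def cont_Fw)

lemma path_image_Fw: "path_image (Fw d w) \<subseteq> Sp d"
  by (auto simp: path_image_def Fw_Sp)

lemma cont_Q: assumes "continuous_on S A" "continuous_on S B" "continuous_on S C" "continuous_on S D"
  shows "continuous_on S (\<lambda>x. Q d a (A x) (B x) (C x) (D x))"
proof (rule cont_mat)
  fix k j
  show "continuous_on S (\<lambda>x. Q d a (A x) (B x) (C x) (D x) k j)"
  proof -
    have "continuous_on S (\<lambda>x. mat_id d k j
      + (if k = a then A x * omega d a j + C x * omega d (Suc a) j else 0)
      + (if k = Suc a then B x * omega d (Suc a) j + D x * omega d a j else 0))"
      by (cases "k = a"; cases "k = Suc a")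
         (auto intro!: continuous_on_add continuous_on_mult continuous_on_const assms)
    then show ?thesis by (simp only: Q_def)
  qed
qed


lemma hom_ctxt:
  assumes hpq: "homotopic_paths (Sp d) p q"
    and cf: "continuous_on {0..1} f" and cg: "continuous_on {0..1} g"
    and fS: "\<And>t. f t \<in> Sp d" and gS: "\<And>t. g t \<in> Sp d"
  shows "homotopic_paths (Sp d) (\<lambda>t. mat_mul d (f t) (mat_mul d (p t) (g t)))
                                (\<lambda>t. mat_mul d (f t) (mat_mul d (q t) (g t)))"
proof -
  obtain h where ch: "continuous_on ({0..1} \<times> {0..1}) h"
    and hS: "h \<in> ({0..1} \<times> {0..1}) \<rightarrow> Sp d"
    and h0: "\<forall>x \<in> {0..1}. h(0,x) = p x" and h1: "\<forall>x \<in> {0..1}. h(1,x) = q x"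
    and he: "\<forall>t \<in> {0..1::real}. pathstart(h \<circ> Pair t) = pathstart p \<and> pathfinish(h \<circ> Pair t) = pathfinish p"
    using hpq unfolding homotopic_paths by blast
  define h' where "h' = (\<lambda>z. mat_mul d (f (snd z)) (mat_mul d (h z) (g (snd z))))"
  have cf': "continuous_on ({0..1} \<times> {0..1::real}) (\<lambda>z. f (snd z))"
    by (rule continuous_on_compose2[OF cf continuous_on_snd]) auto
  have cg': "continuous_on ({0..1} \<times> {0..1::real}) (\<lambda>z. g (snd z))"
    by (rule continuous_on_compose2[OF cg continuous_on_snd]) auto
  show ?thesis
    unfolding homotopic_paths
  proof (intro exI[of _ h'] conjI)
    show "continuous_on ({0..1} \<times> {0..1}) h'"
      unfolding h'_def by (intro cont_mul cf' cg' ch)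
    show "h' \<in> {0..1} \<times> {0..1} \<rightarrow> Sp d"
      using hS by (auto simp: h'_def intro!: Sp_mul fS gS)
    show "\<forall>x\<in>{0..1}. h' (0, x) = mat_mul d (f x) (mat_mul d (p x) (g x))"
      using h0 by (simp add: h'_def)
    show "\<forall>x\<in>{0..1}. h' (1, x) = mat_mul d (f x) (mat_mul d (q x) (g x))"
      using h1 by (simp add: h'_def)
    show "\<forall>t\<in>{0..1}. pathstart (h' \<circ> Pair t) = pathstart (\<lambda>t. mat_mul d (f t) (mat_mul d (p t) (g t))) \<and>
        pathfinish (h' \<circ> Pair t) = pathfinish (\<lambda>t. mat_mul d (f t) (mat_mul d (p t) (g t)))"
      using he by (auto simp: h'_def pathstart_def pathfinish_def)
  qed
qed

lemma hom_braid:
  assumes a: "Suc a < d"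
  shows "homotopic_paths (Sp d) (Fw d [(a, True), (Suc a, True), (a, True)])
                                (Fw d [(Suc a, True), (a, True), (Suc a, True)])"
proof -
  have p: "Fw d [(a, True), (Suc a, True), (a, True)] = (\<lambda>t. Q d a (2*t - t*t*t) t (t*t) (-(t*t)))"
    using Q_prod1[OF a] by (auto simp: sg_def intro!: ext)
  have q: "Fw d [(Suc a, True), (a, True), (Suc a, True)] = (\<lambda>t. Q d a t (2*t - t*t*t) (t*t) (-(t*t)))"
    using Q_prod2[OF a] by (auto simp: sg_def intro!: ext)
  define m where "m = (\<lambda>z::real\<times>real. 1 + fst z * (1 - snd z * snd z))"
  have mpos: "z \<in> {0..1} \<times> {0..1} \<Longrightarrow> m z \<ge> 1" for z
    by (auto simp: m_def mult_le_one)
  define h where "h = (\<lambda>z. Q d a ((2 * snd z - snd z * snd z * snd z) / m z) (snd z * m z) (snd z * snd z) (-(snd z * snd z)))"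
  have hS: "h z \<in> Sp d" if "z \<in> {0..1} \<times> {0..1}" for z
  proof -
    let ?x = "snd z / m z" and ?y = "snd z * m z"
    have "m z \<noteq> 0" using mpos[OF that] by auto
    then have "h z = Q d a (2 * ?x - ?x * ?x * ?y) ?y (?x * ?y) (-(?x * ?y))"
      unfolding h_def by (simp add: field_simps power2_eq_square)
    also have "\<dots> = mat_mul d (Tr d a ?x) (mat_mul d (Tr d (Suc a) ?y) (mat_mul d (Tr d a ?x) (mat_id d)))"
      using Q_prod1[OF a] by simp
    also have "\<dots> \<in> Sp d" by (intro Sp_mul Tr_Sp Sp_id)
    finally show ?thesis .
  qed
  show ?thesis
    unfolding homotopic_paths p q
  proof (intro exI[of _ h] conjI)
    show "continuous_on ({0..1} \<times> {0..1}) h"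
    proof -
      let ?D = "{0..1} \<times> {0..1::real}"
      have cs: "continuous_on ?D (\<lambda>z::real\<times>real. snd z)" by (rule continuous_on_snd[OF continuous_on_id])
      have cm: "continuous_on ?D m"
        unfolding m_def by (intro continuous_intros)
      have nz: "\<forall>z\<in>?D. m z \<noteq> 0" using mpos by force
      have c1: "continuous_on ?D (\<lambda>z. (2 * snd z - snd z * snd z * snd z) / m z)"
        by (rule continuous_on_divide[OF _ cm nz]) (intro continuous_intros)
      have c2: "continuous_on ?D (\<lambda>z. snd z * m z)"
        by (intro continuous_on_mult cm continuous_intros)
      have c3: "continuous_on ?D (\<lambda>z. snd z * snd z)"
        by (intro continuous_intros)
      have c4: "continuous_on ?D (\<lambda>z. - (snd z * snd z))"
        by (intro continuous_intros)
      show ?thesis unfolding h_def by (rule cont_Q[OF c1 c2 c3 c4])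
    qed
    show "h \<in> {0..1} \<times> {0..1} \<rightarrow> Sp d" using hS by auto
    show "\<forall>x\<in>{0..1}. h (0, x) = Q d a (2 * x - x * x * x) x (x * x) (- (x * x))"
      by (simp add: h_def m_def)
    show "\<forall>x\<in>{0..1::real}. h (1, x) = Q d a x (2 * x - x * x * x) (x * x) (- (x * x))"
    proof
      fix x :: real assume "x \<in> {0..1}"
      then have nz: "1 + 1 * (1 - x * x) \<noteq> 0" using mult_le_one[of x x] by auto
      have e1: "(2 * x - x * x * x) / (1 + 1 * (1 - x * x)) = x"
        using nz by (simp add: field_simps)
      have e2: "x * (1 + 1 * (1 - x * x)) = 2 * x - x * x * x"
        by (simp add: algebra_simps)
      show "h (1, x) = Q d a x (2 * x - x * x * x) (x * x) (- (x * x))"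
        by (simp only: h_def m_def fst_conv snd_conv e1 e2)
    qed
    show "\<forall>t\<in>{0..1}. pathstart (h \<circ> Pair t) = pathstart (\<lambda>t. Q d a (2 * t - t * t * t) t (t * t) (- (t * t))) \<and>
        pathfinish (h \<circ> Pair t) = pathfinish (\<lambda>t. Q d a (2 * t - t * t * t) t (t * t) (- (t * t)))"
      by (simp add: h_def m_def pathstart_def pathfinish_def)
  qed
qed

lemma Fw_braid_eq: "braid_eq d u v \<Longrightarrow> homotopic_paths (Sp d) (Fw d u) (Fw d v)"
proof (induction rule: braid_eq.induct)
  case (refl w)
  then show ?case by (simp add: path_Fw path_image_Fw)
next
  case (sym u v)
  from sym.IH show ?case by (rule homotopic_paths_sym)
next
  case (trans u v w)
  from trans.IH show ?case by (rule homotopic_paths_trans)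
next
  case (ctxt u v a b)
  have e: "\<And>w. Fw d (a @ w @ b) = (\<lambda>t. mat_mul d (Fw d a t) (mat_mul d (Fw d w t) (Fw d b t)))"
    by (rule ext) (simp add: Fw_append)
  show ?case unfolding e
    by (rule hom_ctxt[OF ctxt.IH]) (auto simp: cont_Fw Fw_Sp)
next
  case (cancel i b)
  have "Fw d [(i, b), (i, \<not> b)] = Fw d []"
    by (rule ext) (cases b, auto simp: sg_def mat_mul_id_right Tr_add Tr_zero)
  then show ?case by (simp only: homotopic_paths_refl path_Fw path_image_Fw simp_thms)
next
  case (far_comm i j)
  have "Fw d [(i, True), (j, True)] = Fw d [(j, True), (i, True)]"
  proof (rule ext)
    fix t
    have c: "i + 1 < j" using far_comm.hyps by simp
    show "Fw d [(i, True), (j, True)] t = Fw d [(j, True), (i, True)] t"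
      by (simp add: sg_def Tr_comm[OF c] mat_mul_id_right)
  qed
  then show ?case by (simp only: homotopic_paths_refl path_Fw path_image_Fw simp_thms)
next
  case (braid i)
  then have "Suc i < d" by simp
  from hom_braid[OF this] show ?case by (simp only: Suc_eq_plus1)
qed

theorem lemma3p3:
  fixes n :: nat
  shows "\<exists>F :: braid_word \<Rightarrow> (real \<Rightarrow> mat).
     (\<forall>w. braid_word (2*n) w \<longrightarrow>
          sp_path (2*n) (F w) \<and> pathfinish (F w) = burau_word (2*n) w) \<and>
     (\<forall>u v. braid_word (2*n) u \<longrightarrow> braid_word (2*n) v \<longrightarrow> braid_eq (2*n) u v \<longrightarrow>
          homotopic_paths (Sp (2*n)) (F u) (F v)) \<and>
     (\<forall>u v. braid_word (2*n) u \<longrightarrow> braid_word (2*n) v \<longrightarrow>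
          homotopic_paths (Sp (2*n)) (F (u @ v)) (sp_path_mul (2*n) (F u) (F v)))"
proof (intro exI[of _ "Fw (2*n)"] conjI allI impI)
  fix w
  show "sp_path (2*n) (Fw (2*n) w)"
    by (simp add: sp_path_def path_Fw path_image_Fw pathstart_def Fw_zero)
  show "pathfinish (Fw (2*n) w) = burau_word (2*n) w"
    by (simp add: pathfinish_def Fw_one)
next
  fix u v
  assume "braid_eq (2*n) u v"
  then show "homotopic_paths (Sp (2*n)) (Fw (2*n) u) (Fw (2*n) v)" by (rule Fw_braid_eq)
next
  fix u v
  have "Fw (2*n) (u @ v) = sp_path_mul (2*n) (Fw (2*n) u) (Fw (2*n) v)"
    by (rule ext) (simp add: sp_path_mul_def Fw_append)
  moreover have "homotopic_paths (Sp (2*n)) (Fw (2*n) (u @ v)) (Fw (2*n) (u @ v))"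
    by (simp add: path_Fw path_image_Fw)
  ultimately show "homotopic_paths (Sp (2*n)) (Fw (2*n) (u @ v)) (sp_path_mul (2*n) (Fw (2*n) u) (Fw (2*n) v))"
    by simp
qed

end
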